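(* Fix $c\in\{1,\dots,K-1\}$ and suppose $$\bar p_c(\bm x,\bar Y)=\binom{K-1}{c}^{-1}\sum_{y\notin \bar Y}p(\bm x,y)\qquad(\bm x\in\mathcal X,\ \bar Y\in\overline{\mathcal Y}_c).$$ For $\gamma\in[0,1]$ define $$R^u_c(\bm g)=\mathbb E_{\bar p_c(\bm x,\bar Y)}\Big[(1-\gamma)\mathcal L(\bm g(\bm x))-\frac{K-1}{c}\sum_{y\in\bar Y}\ell(\bm g(\bm x),y)\Big]+\gamma\,\mathbb E_{p(\bm x)}\big[\mathcal L(\bm g(\bm x))\big].$$ Then for any loss $\ell$ and decision function $\bm g$ (with finite expectations), $R^u_c(\bm g)=R(\bm g)$.
   Context: Let $K\ge 2$, $\mathcal X\subseteq\mathbb R^d$ the feature space and $\mathcal Y=\{1,\dots,K\}$ the label space. Let $p(\bm x,y)$ be a joint density on $\mathcal X\times\mathcal Y$ with marginal density $p(\bm x)$. For $c\in\{1,\dots,K-1\}$, $\overline{\mathcal Y}_c$ denotes the collection of all $c$-element subsets of $\{1,\dots,K\}$, and $\bar p_c(\bm x,\bar Y)$ is a density on $\mathcal X\times\overline{\mathcal Y}_c$. A decision function is a map $\bm g:\mathcal X\to\mathbb R^K$, a loss is a function $\ell:\mathbb R^K\times\mathcal Y\to[0,\infty)$, the classification risk is $R(\bm g)=\mathbb E_{p(\bm x,y)}[\ell(\bm g(\bm x),y)]$, and the cumulative loss is $\mathcal L(\bm g(\bm x))=\sum_{y=1}^K\ell(\bm g(\bm x),y)$. *)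

theory Defs
  imports "HOL-Analysis.Analysis"
begin

text \<open>Labels are 1..K; feature space X is a Borel subset of a Euclidean space,
densities are w.r.t. Lebesgue measure on X (times counting measure on labels).
Vectors in R^K are represented as functions nat => real.\<close>

definition label_set :: "nat \<Rightarrow> nat set" where
  "label_set K = {1..K}"

definition comp_label_sets :: "nat \<Rightarrow> nat \<Rightarrow> nat set set" where
  "comp_label_sets K c = {Y. Y \<subseteq> {1..K} \<and> card Y = c}"

definition joint_density :: "'a::euclidean_space set \<Rightarrow> nat \<Rightarrow> ('a \<Rightarrow> nat \<Rightarrow> real) \<Rightarrow> bool" where
  "joint_density X K p \<longleftrightarrow> X \<in> sets lborel \<and> (\<forall>x y. 0 \<le> p x y)
     \<and> (\<forall>y\<in>label_set K. set_integrable lborel X (\<lambda>x. p x y))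
     \<and> (\<Sum>y\<in>label_set K. LINT x:X|lborel. p x y) = 1"

definition marginal :: "nat \<Rightarrow> ('a \<Rightarrow> nat \<Rightarrow> real) \<Rightarrow> 'a \<Rightarrow> real" where
  "marginal K p x = (\<Sum>y\<in>label_set K. p x y)"

definition cumulative_loss :: "nat \<Rightarrow> ((nat \<Rightarrow> real) \<Rightarrow> nat \<Rightarrow> real) \<Rightarrow> (nat \<Rightarrow> real) \<Rightarrow> real" where
  "cumulative_loss K loss v = (\<Sum>y\<in>label_set K. loss v y)"

definition class_risk :: "'a::euclidean_space set \<Rightarrow> nat \<Rightarrow> ('a \<Rightarrow> nat \<Rightarrow> real)
    \<Rightarrow> ((nat \<Rightarrow> real) \<Rightarrow> nat \<Rightarrow> real) \<Rightarrow> ('a \<Rightarrow> nat \<Rightarrow> real) \<Rightarrow> real" where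
  "class_risk X K p loss g = (LINT x:X|lborel. (\<Sum>y\<in>label_set K. p x y * loss (g x) y))"

definition comp_integrand :: "nat \<Rightarrow> nat \<Rightarrow> real \<Rightarrow> ('a \<Rightarrow> nat set \<Rightarrow> real)
    \<Rightarrow> ((nat \<Rightarrow> real) \<Rightarrow> nat \<Rightarrow> real) \<Rightarrow> ('a \<Rightarrow> nat \<Rightarrow> real) \<Rightarrow> 'a \<Rightarrow> real" where
  "comp_integrand K c \<gamma> pbar loss g x =
     (\<Sum>Yb\<in>comp_label_sets K c. pbar x Yb *
        ((1 - \<gamma>) * cumulative_loss K loss (g x)
          - (real K - 1) / real c * (\<Sum>y\<in>Yb. loss (g x) y)))"

definition unbiased_comp_risk :: "'a::euclidean_space set \<Rightarrow> nat \<Rightarrow> nat \<Rightarrow> real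
    \<Rightarrow> ('a \<Rightarrow> nat \<Rightarrow> real) \<Rightarrow> ('a \<Rightarrow> nat set \<Rightarrow> real)
    \<Rightarrow> ((nat \<Rightarrow> real) \<Rightarrow> nat \<Rightarrow> real) \<Rightarrow> ('a \<Rightarrow> nat \<Rightarrow> real) \<Rightarrow> real" where
  "unbiased_comp_risk X K c \<gamma> p pbar loss g =
     (LINT x:X|lborel. comp_integrand K c \<gamma> pbar loss g x)
     + \<gamma> * (LINT x:X|lborel. marginal K p x * cumulative_loss K loss (g x))"

end

theory Submission
  imports Defs
begin

lemma cnt:
  assumes "finite I" "y \<in> I"
  shows "card {Yb\<in>{Y. Y \<subseteq> I \<and> card Y = c}. y \<notin> Yb} = (card I - 1) choose c"
proof -
  have "{Yb\<in>{Y. Y \<subseteq> I \<and> card Y = c}. y \<notin> Yb} = {B. B \<subseteq> I - {y} \<and> card B = c}" by auto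
  thus ?thesis using assms n_subsets[of "I - {y}" c] by simp
qed

lemma cnt2:
  assumes "finite I" "y \<in> I" "y' \<in> I" "y \<noteq> y'"
  shows "card {Yb\<in>{Y. Y \<subseteq> I \<and> card Y = c}. y \<notin> Yb \<and> y' \<notin> Yb} = (card I - 2) choose c"
proof -
  have "{Yb\<in>{Y. Y \<subseteq> I \<and> card Y = c}. y \<notin> Yb \<and> y' \<notin> Yb} = {B. B \<subseteq> I - {y,y'} \<and> card B = c}" by auto
  moreover have "card (I - {y,y'}) = card I - 2" using assms by (simp add: card_Diff_subset)
  ultimately show ?thesis using assms n_subsets[of "I - {y,y'}" c] by simp
qed

lemma cnt3:
  assumes "finite I" "y \<in> I" "y' \<in> I" "y \<noteq> y'"
  shows "card {Yb\<in>{Y. Y \<subseteq> I \<and> card Y = c}. y \<notin> Yb \<and> y' \<in> Yb} = ((card I - 1) choose c) - ((card I - 2) choose c)"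
proof -
  let ?S = "{Y. Y \<subseteq> I \<and> card Y = c}"
  let ?A = "{Yb\<in>?S. y \<notin> Yb}"
  let ?B = "{Yb\<in>?S. y \<notin> Yb \<and> y' \<notin> Yb}"
  have fin: "finite ?S" by (rule finite_subset[of _ "Pow I"]) (auto simp: assms(1))
  have finA: "finite ?A" by (rule finite_subset[OF _ fin]) auto
  have e: "{Yb\<in>?S. y \<notin> Yb \<and> y' \<in> Yb} = ?A - ?B" by blast
  have sub: "?B \<subseteq> ?A" by blast
  have "card (?A - ?B) = card ?A - card ?B"
    using card_Diff_subset[OF finite_subset[OF sub finA] sub] .
  thus ?thesis unfolding e cnt[OF assms(1,2)] cnt2[OF assms] .
qed

lemma h1:
  assumes "finite I"
  shows "(\<Sum>Yb\<in>{Y. Y \<subseteq> I \<and> card Y = c}. \<Sum>y\<in>I - Yb. (p y::real)) = real ((card I - 1) choose c) * (\<Sum>y\<in>I. p y)"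
proof -
  let ?S = "{Y. Y \<subseteq> I \<and> card Y = c}"
  have fin: "finite ?S" by (rule finite_subset[of _ "Pow I"]) (auto simp: assms(1))
  have "(\<Sum>Yb\<in>?S. \<Sum>y\<in>I - Yb. p y) = (\<Sum>Yb\<in>?S. \<Sum>y\<in>I. if y \<notin> Yb then p y else 0)"
    by (rule sum.cong[OF refl]) (simp add: sum.inter_filter[OF assms, symmetric] set_diff_eq)
  also have "\<dots> = (\<Sum>y\<in>I. \<Sum>Yb\<in>?S. if y \<notin> Yb then p y else 0)" by (rule sum.swap)
  also have "\<dots> = (\<Sum>y\<in>I. p y * real ((card I - 1) choose c))"
  proof (rule sum.cong[OF refl])
    fix y assume y: "y \<in> I"
    have "(\<Sum>Yb\<in>?S. if y \<notin> Yb then p y else 0) = (\<Sum>Yb\<in>{Yb\<in>?S. y \<notin> Yb}. p y)"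
      by (rule sum.inter_filter[OF fin, symmetric])
    also have "\<dots> = p y * real ((card I - 1) choose c)" using cnt[OF assms y] by simp
    finally show "(\<Sum>Yb\<in>?S. if y \<notin> Yb then p y else 0) = p y * real ((card I - 1) choose c)" .
  qed
  finally show ?thesis by (metis sum_distrib_right mult.commute)
qed

lemma h2:
  assumes "finite I"
  shows "(\<Sum>Yb\<in>{Y. Y \<subseteq> I \<and> card Y = c}. (\<Sum>y\<in>I - Yb. (p y::real)) * (\<Sum>y\<in>Yb. l y))
     = (real ((card I - 1) choose c) - real ((card I - 2) choose c)) * ((\<Sum>y\<in>I. p y) * (\<Sum>y\<in>I. l y) - (\<Sum>y\<in>I. p y * l y))"
proof -
  let ?S = "{Y. Y \<subseteq> I \<and> card Y = c}"
  let ?M = "real ((card I - 1) choose c) - real ((card I - 2) choose c)"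
  have fin: "finite ?S" by (rule finite_subset[of _ "Pow I"]) (auto simp: assms(1))
  have "(\<Sum>Yb\<in>?S. (\<Sum>y\<in>I - Yb. p y) * (\<Sum>y\<in>Yb. l y)) = (\<Sum>Yb\<in>?S. \<Sum>y\<in>I. \<Sum>y'\<in>I. if y \<notin> Yb \<and> y' \<in> Yb then p y * l y' else 0)"
  proof (rule sum.cong[OF refl])
    fix Yb assume "Yb \<in> ?S"
    hence sub: "Yb \<subseteq> I" by auto
    have a: "(\<Sum>y\<in>I - Yb. p y) = (\<Sum>y\<in>I. if y \<notin> Yb then p y else 0)"
      by (simp add: sum.inter_filter[OF assms, symmetric] set_diff_eq)
    have "{y\<in>I. y \<in> Yb} = Yb" using sub by auto
    hence b: "(\<Sum>y\<in>Yb. l y) = (\<Sum>y\<in>I. if y \<in> Yb then l y else 0)"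
      using sum.inter_filter[OF assms, of l "\<lambda>y. y \<in> Yb"] by simp
    show "(\<Sum>y\<in>I - Yb. p y) * (\<Sum>y\<in>Yb. l y) = (\<Sum>y\<in>I. \<Sum>y'\<in>I. if y \<notin> Yb \<and> y' \<in> Yb then p y * l y' else 0)"
      unfolding a b sum_product by (rule sum.cong[OF refl], rule sum.cong[OF refl]) auto
  qed
  also have "\<dots> = (\<Sum>y\<in>I. \<Sum>Yb\<in>?S. \<Sum>y'\<in>I. if y \<notin> Yb \<and> y' \<in> Yb then p y * l y' else 0)" by (rule sum.swap)
  also have "\<dots> = (\<Sum>y\<in>I. \<Sum>y'\<in>I. \<Sum>Yb\<in>?S. if y \<notin> Yb \<and> y' \<in> Yb then p y * l y' else 0)"
    by (rule sum.cong[OF refl], rule sum.swap)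
  also have "\<dots> = (\<Sum>y\<in>I. \<Sum>y'\<in>I. ?M * (p y * l y') - (if y' = y then ?M * (p y * l y') else 0))"
  proof (rule sum.cong[OF refl], rule sum.cong[OF refl])
    fix y y' assume y: "y \<in> I" and y': "y' \<in> I"
    have "(\<Sum>Yb\<in>?S. if y \<notin> Yb \<and> y' \<in> Yb then p y * l y' else 0) = (\<Sum>Yb\<in>{Yb\<in>?S. y \<notin> Yb \<and> y' \<in> Yb}. p y * l y')"
      by (rule sum.inter_filter[OF fin, symmetric])
    also have "\<dots> = (if y' = y then 0 else ?M * (p y * l y'))"
    proof (cases "y' = y")
      case True
      hence "{Yb\<in>?S. y \<notin> Yb \<and> y' \<in> Yb} = {}" by auto
      thus ?thesis using True by simp
    next
      case False
      have le: "(card I - 2) choose c \<le> (card I - 1) choose c" by (rule binomial_right_mono) simp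
      show ?thesis using cnt3[OF assms y y'] False le by (simp add: of_nat_diff)
    qed
    finally show "(\<Sum>Yb\<in>?S. if y \<notin> Yb \<and> y' \<in> Yb then p y * l y' else 0) = ?M * (p y * l y') - (if y' = y then ?M * (p y * l y') else 0)" by simp
  qed
  also have "\<dots> = (\<Sum>y\<in>I. ?M * (p y * (\<Sum>y'\<in>I. l y')) - ?M * (p y * l y))"
    by (rule sum.cong[OF refl]) (simp add: sum_subtractf sum_distrib_left assms)
  also have "\<dots> = ?M * ((\<Sum>y\<in>I. p y) * (\<Sum>y\<in>I. l y) - (\<Sum>y\<in>I. p y * l y))"
    by (simp only: sum_subtractf right_diff_distrib sum_distrib_left[symmetric] sum_distrib_right[symmetric])
  finally show ?thesis .
qed

lemma point:
  fixes p l :: "nat \<Rightarrow> real" and \<gamma> :: real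
  assumes fI: "finite I" and cI: "card I = K" and c1: "1 \<le> c" and c2: "c \<le> K - 1"
  shows "(\<Sum>Yb\<in>{Y. Y \<subseteq> I \<and> card Y = c}. (\<Sum>y\<in>I - Yb. p y) / real ((K - 1) choose c) *
            ((1 - \<gamma>) * (\<Sum>y\<in>I. l y) - (real K - 1) / real c * (\<Sum>y\<in>Yb. l y)))
         + \<gamma> * ((\<Sum>y\<in>I. p y) * (\<Sum>y\<in>I. l y)) = (\<Sum>y\<in>I. p y * l y)"
proof -
  let ?S = "{Y. Y \<subseteq> I \<and> card Y = c}"
  define N where "N = real ((K - 1) choose c)"
  define M where "M = real ((K - 1) choose c) - real ((K - 2) choose c)"
  define P where "P = (\<Sum>y\<in>I. p y)"
  define L where "L = (\<Sum>y\<in>I. l y)"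
  define Q where "Q = (\<Sum>y\<in>I. p y * l y)"
  define r where "r = (real K - 1) / real c"
  have Npos: "N > 0" unfolding N_def using c2 by simp
  have red: "(K - 1) choose c = ((K - 2) choose (c - 1)) + ((K - 2) choose c)"
    using choose_reduce_nat[of "K - 1" c] c1 c2 by (simp add: diff_diff_add numeral_2_eq_2)
  have tb: "c * ((K - 1) choose c) = (K - 1) * ((K - 2) choose (c - 1))"
    using times_binomial_minus1_eq[of c "K - 1"] c1 by (simp add: diff_diff_add numeral_2_eq_2)
  have M2: "M = real ((K - 2) choose (c - 1))" unfolding M_def using red by simp
  have K1: "real (K - 1) = real K - 1" using c1 c2 by (simp add: of_nat_diff)
  have rM: "r * M = N"
  proof -
    have "real c * N = real (K - 1) * M" unfolding N_def M2 using tb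
      by (metis of_nat_mult)
    thus ?thesis unfolding r_def K1 using c1 by (simp add: field_simps)
  qed
  have e1: "(\<Sum>Yb\<in>?S. (\<Sum>y\<in>I - Yb. p y)) = N * P"
    using h1[OF fI, where c=c and p=p] unfolding N_def P_def cI .
  have e2: "(\<Sum>Yb\<in>?S. (\<Sum>y\<in>I - Yb. p y) * (\<Sum>y\<in>Yb. l y)) = M * (P * L - Q)"
    using h2[OF fI, where c=c and p=p and l=l] unfolding M_def P_def L_def Q_def cI .
  have "(\<Sum>Yb\<in>?S. (\<Sum>y\<in>I - Yb. p y) / N * ((1 - \<gamma>) * L - r * (\<Sum>y\<in>Yb. l y)))
      = (\<Sum>Yb\<in>?S. ((1 - \<gamma>) * L / N) * (\<Sum>y\<in>I - Yb. p y) - (r / N) * ((\<Sum>y\<in>I - Yb. p y) * (\<Sum>y\<in>Yb. l y)))"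
    using Npos by (intro sum.cong[OF refl]) (simp add: field_simps)
  also have "\<dots> = ((1 - \<gamma>) * L / N) * (N * P) - (r / N) * (M * (P * L - Q))"
    by (simp only: sum_subtractf sum_distrib_left[symmetric] e1 e2)
  also have "\<dots> = (1 - \<gamma>) * L * P - (r * M) / N * (P * L - Q)"
    using Npos by (simp add: field_simps)
  also have "\<dots> = (1 - \<gamma>) * L * P - (P * L - Q)" using rM Npos by simp
  finally have "(\<Sum>Yb\<in>?S. (\<Sum>y\<in>I - Yb. p y) / N * ((1 - \<gamma>) * L - r * (\<Sum>y\<in>Yb. l y)))
     = (1 - \<gamma>) * L * P - (P * L - Q)" .
  thus ?thesis unfolding N_def[symmetric] r_def[symmetric] L_def[symmetric] P_def[symmetric] Q_def[symmetric]
    by (simp add: algebra_simps)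
qed

theorem lemma2:
  fixes X :: "'a::euclidean_space set" and K c :: nat and \<gamma> :: real
    and p :: "'a \<Rightarrow> nat \<Rightarrow> real" and pbar :: "'a \<Rightarrow> nat set \<Rightarrow> real"
    and loss :: "(nat \<Rightarrow> real) \<Rightarrow> nat \<Rightarrow> real" and g :: "'a \<Rightarrow> nat \<Rightarrow> real"
  assumes K2: "2 \<le> K"
    and c_range: "1 \<le> c" "c \<le> K - 1"
    and dens: "joint_density X K p"
    and pbar_def: "\<And>x Yb. x \<in> X \<Longrightarrow> Yb \<in> comp_label_sets K c \<Longrightarrow>
        pbar x Yb = (\<Sum>y\<in>label_set K - Yb. p x y) / real ((K - 1) choose c)"
    and \<gamma>_range: "0 \<le> \<gamma>" "\<gamma> \<le> 1"
    and loss_nonneg: "\<And>v y. 0 \<le> loss v y"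
    and fin_risk: "set_integrable lborel X (\<lambda>x. \<Sum>y\<in>label_set K. p x y * loss (g x) y)"
    and fin_comp: "set_integrable lborel X (comp_integrand K c \<gamma> pbar loss g)"
    and fin_marg: "set_integrable lborel X (\<lambda>x. marginal K p x * cumulative_loss K loss (g x))"
  shows "unbiased_comp_risk X K c \<gamma> p pbar loss g = class_risk X K p loss g"
  proof -
  let ?I = "label_set K"
  have fI: "finite ?I" and cI: "card ?I = K" by (simp_all add: label_set_def)
  have Xs: "X \<in> sets lborel" using dens unfolding joint_density_def by simp
  have pt: "comp_integrand K c \<gamma> pbar loss g x + \<gamma> * (marginal K p x * cumulative_loss K loss (g x))
      = (\<Sum>y\<in>label_set K. p x y * loss (g x) y)" if x: "x \<in> X" for x
  proof -
    have cs: "comp_label_sets K c = {Y. Y \<subseteq> ?I \<and> card Y = c}"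
      by (simp add: comp_label_sets_def label_set_def)
    have "comp_integrand K c \<gamma> pbar loss g x =
      (\<Sum>Yb\<in>{Y. Y \<subseteq> ?I \<and> card Y = c}. (\<Sum>y\<in>?I - Yb. p x y) / real ((K - 1) choose c) *
            ((1 - \<gamma>) * (\<Sum>y\<in>?I. loss (g x) y) - (real K - 1) / real c * (\<Sum>y\<in>Yb. loss (g x) y)))"
      unfolding comp_integrand_def cumulative_loss_def cs
      by (rule sum.cong[OF refl]) (simp add: pbar_def[OF x] cs)
    thus ?thesis unfolding marginal_def cumulative_loss_def
      using point[OF fI cI c_range, where p="p x" and l="loss (g x)" and \<gamma>=\<gamma>] by simp
  qed
  have "unbiased_comp_risk X K c \<gamma> p pbar loss g
      = (LINT x:X|lborel. comp_integrand K c \<gamma> pbar loss g x + \<gamma> * (marginal K p x * cumulative_loss K loss (g x)))"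
    unfolding unbiased_comp_risk_def
    using set_integral_add(2)[OF fin_comp set_integrable_mult_right[OF fin_marg, of \<gamma>]] by simp
  also have "\<dots> = class_risk X K p loss g"
    unfolding class_risk_def by (rule set_lebesgue_integral_cong[OF Xs]) (simp add: pt)
  finally show ?thesis .
qed

end
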